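(* Let $n$ and $a$ be coprime positive integers. For every integer $k$ define $\pi_k\in S(\mathbb{Z}_n)$ by $\pi_k(x)=ax+k$. Then $\mathrm{cyc}(\pi_k)\leq\mathrm{cyc}(\pi_0)$ for every integer $k$.
   Context: $S(\mathbb{Z}_n)$ is the set of bijections $\mathbb{Z}_n\to\mathbb{Z}_n$; $\mathrm{cyc}(\pi)$ is the number of cycles (including fixed points) in the cycle decomposition of $\pi$. *)

theory Defs
  imports "HOL-Combinatorics.Orbits"
begin

definition cyc :: "'a set \<Rightarrow> ('a \<Rightarrow> 'a) \<Rightarrow> nat" where
  "cyc S f = card ((\<lambda>x. orbit f x) ` S)"

text \<open>The affine map x \<mapsto> a x + k on Z_n, with Z_n represented as {0..<n} of int.\<close>
definition aff_map :: "int \<Rightarrow> int \<Rightarrow> int \<Rightarrow> int \<Rightarrow> int" where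
  "aff_map n a k x = (a * x + k) mod n"

end

theory Submission
  imports Defs "HOL-Combinatorics.Cycles"
begin

lemma card_orbit_lp:
  assumes "permutation g"
  shows "card (orbit g x) = least_power g x"
proof -
  have "orbit g x = set (support g x)"
    using orbit_altdef_permutation[OF assms] support_set[OF assms] by auto
  moreover have "distinct (support g x)" using cycle_of_permutation[OF assms] by simp
  ultimately show ?thesis using distinct_card[of "support g x"] by simp
qed

lemma card_dvd_multiples:
  assumes "d > 0" "d dvd (N::nat)"
  shows "card {j\<in>{..<N}. d dvd j} = N div d"
proof -
  obtain M where M: "N = d * M" using assms(2) by (rule dvdE)
  have NM: "N div d = M" using M assms(1) by simp
  have "{j\<in>{..<N}. d dvd j} = (\<lambda>i. d * i) ` {..<M}"
  proof (rule set_eqI, rule iffI)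
    fix j assume "j \<in> {j\<in>{..<N}. d dvd j}"
    then have j: "j < N" "d dvd j" by auto
    from j(2) obtain i where i: "j = d * i" by (rule dvdE)
    have "d * i < d * M" using j i M by simp
    then have "i < M" by simp
    then show "j \<in> (\<lambda>i. d * i) ` {..<M}" using i by auto
  next
    fix j assume "j \<in> (\<lambda>i. d * i) ` {..<M}"
    then obtain i where i: "i < M" "j = d * i" by auto
    have "d * i < d * M" using i assms(1) by simp
    then show "j \<in> {j\<in>{..<N}. d dvd j}" using i M by auto
  qed
  moreover have "inj_on (\<lambda>i. d * i) {..<M}" using assms(1) by (auto simp: inj_on_def)
  ultimately show ?thesis using NM by (simp add: card_image)
qed

lemma burnside1:
  assumes g: "g permutes S" and fin: "finite S" and N: "\<forall>x\<in>S. least_power g x dvd N"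
  shows "(\<Sum>j<N. card {x\<in>S. (g^^j) x = x}) = N * card ((\<lambda>x. orbit g x) ` S)"
proof -
  have perm: "permutation g" using g fin permutation_permutes by blast
  have sw: "(\<Sum>j<N. card {x\<in>S. (g^^j) x = x}) = (\<Sum>x\<in>S. card {j\<in>{..<N}. (g^^j) x = x})"
  proof -
    have "(\<Sum>j<N. card {x\<in>S. (g^^j) x = x}) = (\<Sum>j<N. \<Sum>x\<in>S. if (g^^j) x = x then 1 else 0)"
      using fin by (simp add: sum.inter_filter[symmetric])
    also have "\<dots> = (\<Sum>x\<in>S. \<Sum>j<N. if (g^^j) x = x then 1 else 0)" by (rule sum.swap)
    also have "\<dots> = (\<Sum>x\<in>S. card {j\<in>{..<N}. (g^^j) x = x})"
      by (simp add: sum.inter_filter[symmetric])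
    finally show ?thesis .
  qed
  have cnt: "card {j\<in>{..<N}. (g^^j) x = x} = N div least_power g x" if "x \<in> S" for x
  proof -
    have "{j\<in>{..<N}. (g^^j) x = x} = {j\<in>{..<N}. least_power g x dvd j}"
      using least_power_dvd[OF perm] by auto
    then show ?thesis using card_dvd_multiples least_power_of_permutation(2)[OF perm] N that by auto
  qed
  have "(\<Sum>x\<in>S. card {j\<in>{..<N}. (g^^j) x = x}) = (\<Sum>x\<in>S. N div least_power g x)"
    using cnt by simp
  also have "\<dots> = (\<Sum>C\<in>(\<lambda>x. orbit g x) ` S. \<Sum>x\<in>{x. x \<in> S \<and> orbit g x = C}. N div least_power g x)"
    by (rule sum.group[symmetric]) (use fin in auto)
  also have "\<dots> = (\<Sum>C\<in>(\<lambda>x. orbit g x) ` S. N)"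
  proof (rule sum.cong[OF refl])
    fix C assume "C \<in> (\<lambda>x. orbit g x) ` S"
    then obtain y where y: "y \<in> S" "C = orbit g y" by (rule imageE)
    have cyc: "cyclic_on g C" unfolding y(2) by (rule cyclic_on_orbit'[OF perm])
    have eq: "{x. x \<in> S \<and> orbit g x = C} = C"
    proof (rule set_eqI, rule iffI)
      fix x assume "x \<in> {x. x \<in> S \<and> orbit g x = C}"
      then have "orbit g x = C" by simp
      then show "x \<in> C" using permutation_self_in_orbit[OF perm, of x] by simp
    next
      fix x assume x: "x \<in> C"
      have "x \<in> S" using x y permutes_orbit_subset[OF g] by blast
      moreover have "orbit g x = C" using orbit_cyclic_eq3[OF cyc x] .
      ultimately show "x \<in> {x. x \<in> S \<and> orbit g x = C}" by simp
    qed
    have lp: "least_power g x = card C" if "x \<in> C" for x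
      using card_orbit_lp[OF perm, of x] orbit_cyclic_eq3[OF cyc that] by simp
    have "card C = least_power g y" using y card_orbit_lp[OF perm] by simp
    hence dv: "card C dvd N" using N y by simp
    have "(\<Sum>x\<in>{x. x \<in> S \<and> orbit g x = C}. N div least_power g x) = (\<Sum>x\<in>C. N div card C)"
      using eq lp by simp
    also have "\<dots> = card C * (N div card C)" by simp
    also have "\<dots> = N" using dv by simp
    finally show "(\<Sum>x\<in>{x. x \<in> S \<and> orbit g x = C}. N div least_power g x) = N" .
  qed
  also have "\<dots> = N * card ((\<lambda>x. orbit g x) ` S)" by simp
  finally show ?thesis using sw by simp
qed

lemma restrict_facts:
  assumes fin: "finite S" and maps: "\<And>x. x \<in> S \<Longrightarrow> f x \<in> S" and inj: "inj_on f S"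
  shows "perm_restrict f S permutes S"
    and "\<And>x j. x \<in> S \<Longrightarrow> (perm_restrict f S ^^ j) x = (f ^^ j) x"
    and "cyc S f = cyc S (perm_restrict f S)"
proof -
  have "f ` S = S"
    using endo_inj_surj[OF fin _ inj] maps by blast
  hence bij: "bij_betw f S S" using inj by (simp add: bij_betw_def)
  have "bij_betw (perm_restrict f S) S S"
    using bij by (rule bij_betw_cong[THEN iffD1, rotated]) (simp add: perm_restrict_simps)
  then show "perm_restrict f S permutes S"
    by (rule bij_imp_permutes) (simp add: perm_restrict_simps)
  show fp: "(perm_restrict f S ^^ j) x = (f ^^ j) x" if "x \<in> S" for x j
  proof -
    have "(perm_restrict f S ^^ j) x = (f ^^ j) x \<and> (f ^^ j) x \<in> S" for j
      by (induction j) (use that maps in \<open>auto simp: perm_restrict_simps\<close>)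
    then show ?thesis by blast
  qed
  have "orbit f x = orbit (perm_restrict f S) x" if "x \<in> S" for x
    by (rule orbit_cong0[OF that]) (auto simp: perm_restrict_simps maps)
  then show "cyc S f = cyc S (perm_restrict f S)"
    unfolding cyc_def by (metis (no_types, lifting) image_cong)
qed

lemma aff_diff:
  fixes n a k y x0 :: int
  shows "((aff_map n a k ^^ j) y - (aff_map n a k ^^ j) x0) mod n = (a^j * (y - x0)) mod n"
proof (induction j)
  case 0 then show ?case by simp
next
  case (Suc j)
  define u where "u = (aff_map n a k ^^ j) y"
  define v where "v = (aff_map n a k ^^ j) x0"
  have "((aff_map n a k ^^ Suc j) y - (aff_map n a k ^^ Suc j) x0) mod n
      = ((a*u+k) mod n - (a*v+k) mod n) mod n" by (simp add: u_def v_def aff_map_def)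
  also have "\<dots> = (a*u+k - (a*v+k)) mod n" by (simp add: mod_diff_eq)
  also have "\<dots> = (a*(u-v)) mod n" by (simp add: algebra_simps)
  also have "\<dots> = (a*((u-v) mod n)) mod n" by (simp add: mod_mult_right_eq)
  also have "\<dots> = (a*((a^j * (y - x0)) mod n)) mod n" using Suc by (simp add: u_def v_def)
  also have "\<dots> = (a^Suc j * (y - x0)) mod n" by (simp add: mod_mult_right_eq mult.assoc)
  finally show ?case .
qed

lemma aff0_pow:
  fixes n a z :: int
  assumes "0 \<le> z" "z < n"
  shows "(aff_map n a 0 ^^ j) z = (a^j * z) mod n"
proof (induction j)
  case 0 then show ?case using assms by simp
next
  case (Suc j)
  then show ?case by (simp add: aff_map_def mod_mult_right_eq mult.assoc)
qed

lemma fix_le: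
  fixes n a k :: int
  assumes "n > 0"
  shows "card {x\<in>{0..<n}. (aff_map n a k ^^ j) x = x} \<le> card {x\<in>{0..<n}. (aff_map n a 0 ^^ j) x = x}"
proof (cases "{x\<in>{0..<n}. (aff_map n a k ^^ j) x = x} = {}")
  case True then show ?thesis by (subst True) simp
next
  case False
  then obtain x0 where x0: "x0 \<in> {0..<n}" "(aff_map n a k ^^ j) x0 = x0" by auto
  let ?h = "\<lambda>y. (y - x0) mod n"
  have "inj_on ?h {x\<in>{0..<n}. (aff_map n a k ^^ j) x = x}"
  proof (rule inj_onI)
    fix y y' assume y: "y \<in> {x\<in>{0..<n}. (aff_map n a k ^^ j) x = x}"
      and y': "y' \<in> {x\<in>{0..<n}. (aff_map n a k ^^ j) x = x}" and e: "(y - x0) mod n = (y' - x0) mod n"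
    have "n dvd (y - x0) - (y' - x0)" using e by (simp add: mod_eq_dvd_iff)
    hence "n dvd y - y'" by simp
    hence "y mod n = y' mod n" by (simp add: mod_eq_dvd_iff)
    then show "y = y'" using y y' by simp
  qed
  moreover have sub: "?h ` {x\<in>{0..<n}. (aff_map n a k ^^ j) x = x} \<subseteq> {x\<in>{0..<n}. (aff_map n a 0 ^^ j) x = x}"
  proof
    fix z assume "z \<in> ?h ` {x\<in>{0..<n}. (aff_map n a k ^^ j) x = x}"
    then obtain y where y: "y \<in> {0..<n}" "(aff_map n a k ^^ j) y = y" and z: "z = (y - x0) mod n" by auto
    have zr: "0 \<le> z" "z < n" using z assms by auto
    have "(aff_map n a 0 ^^ j) z = (a^j * z) mod n" using aff0_pow zr by blast
    also have "\<dots> = (a^j * (y - x0)) mod n" unfolding z by (simp add: mod_mult_right_eq)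
    also have "\<dots> = ((aff_map n a k ^^ j) y - (aff_map n a k ^^ j) x0) mod n" by (rule aff_diff[symmetric])
    also have "\<dots> = z" using y x0 z by simp
    finally show "z \<in> {x\<in>{0..<n}. (aff_map n a 0 ^^ j) x = x}" using zr by simp
  qed
  moreover have "finite {x\<in>{0..<n}. (aff_map n a 0 ^^ j) x = x}" by (rule finite_subset[of _ "{0..<n}"]) auto
  ultimately show ?thesis
    by (rule card_inj_on_le)
qed

lemma aff_maps:
  fixes n a k x :: int
  assumes "n > 0"
  shows "aff_map n a k x \<in> {0..<n}"
  using assms by (simp add: aff_map_def)

lemma aff_inj:
  fixes n a k :: int
  assumes "n > 0" "coprime a n"
  shows "inj_on (aff_map n a k) {0..<n}"
proof (rule inj_onI)
  fix x y assume x: "x \<in> {0..<n}" and y: "y \<in> {0..<n}" and e: "aff_map n a k x = aff_map n a k y"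
  have "n dvd (a*x+k) - (a*y+k)" using e by (simp add: aff_map_def mod_eq_dvd_iff)
  hence "n dvd a * (x - y)" by (simp add: algebra_simps)
  moreover have "coprime n a" using assms(2) by (simp add: coprime_commute)
  ultimately have "n dvd x - y" using coprime_dvd_mult_right_iff[of n a "x - y"] by simp
  hence "x mod n = y mod n" by (simp add: mod_eq_dvd_iff)
  then show "x = y" using x y by simp
qed

lemma main_identity:
  fixes n a k :: int
  assumes "n > 0" "coprime a n"
  defines "S \<equiv> {0..<n}"
  defines "N \<equiv> fact (card S) :: nat"
  shows "(\<Sum>j<N. card {x\<in>S. (aff_map n a k ^^ j) x = x}) = N * cyc S (aff_map n a k)"
proof -
  let ?f = "aff_map n a k"
  let ?g = "perm_restrict ?f S"
  have fin: "finite S" unfolding S_def by simp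
  have maps: "\<And>x. x \<in> S \<Longrightarrow> ?f x \<in> S" using aff_maps assms(1) unfolding S_def by blast
  have inj: "inj_on ?f S" using aff_inj assms unfolding S_def by blast
  note R = restrict_facts[OF fin maps inj]
  have perm: "permutation ?g" using R(1) fin permutation_permutes by blast
  have dv: "\<forall>x\<in>S. least_power ?g x dvd N"
  proof
    fix x assume x: "x \<in> S"
    have "least_power ?g x = card (orbit ?g x)" using card_orbit_lp[OF perm] by simp
    also have "\<dots> \<le> card S" using permutes_orbit_subset[OF R(1) x] fin by (simp add: card_mono)
    finally have le: "least_power ?g x \<le> card S" .
    have "least_power ?g x > 0" using least_power_of_permutation(2)[OF perm] .
    then show "least_power ?g x dvd N" unfolding N_def using le by (simp add: dvd_fact)
  qed
  have "(\<Sum>j<N. card {x\<in>S. (?f ^^ j) x = x}) = (\<Sum>j<N. card {x\<in>S. (?g ^^ j) x = x})"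
  proof (rule sum.cong[OF refl])
    fix j
    have "{x\<in>S. (?f ^^ j) x = x} = {x\<in>S. (?g ^^ j) x = x}" using R(2) by auto
    then show "card {x\<in>S. (?f ^^ j) x = x} = card {x\<in>S. (?g ^^ j) x = x}" by simp
  qed
  also have "\<dots> = N * cyc S ?g" unfolding cyc_def by (rule burnside1[OF R(1) fin dv])
  also have "\<dots> = N * cyc S ?f" using R(3) by simp
  finally show ?thesis .
qed

theorem lemma3p2:
  fixes n a k :: int
  assumes "n > 0" and "a > 0" and "coprime a n"
  shows "cyc {0..<n} (aff_map n a k) \<le> cyc {0..<n} (aff_map n a 0)"
proof -
  define N :: nat where "N = fact (card {0..<n})"
  have "N * cyc {0..<n} (aff_map n a k) = (\<Sum>j<N. card {x\<in>{0..<n}. (aff_map n a k ^^ j) x = x})"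
    unfolding N_def by (rule main_identity[OF assms(1,3), symmetric])
  also have "\<dots> \<le> (\<Sum>j<N. card {x\<in>{0..<n}. (aff_map n a 0 ^^ j) x = x})"
    by (rule sum_mono) (rule fix_le[OF assms(1)])
  also have "\<dots> = N * cyc {0..<n} (aff_map n a 0)"
    unfolding N_def by (rule main_identity[OF assms(1,3)])
  finally have "N * cyc {0..<n} (aff_map n a k) \<le> N * cyc {0..<n} (aff_map n a 0)" .
  moreover have "N > 0" unfolding N_def by simp
  ultimately show ?thesis by simp
qed

end
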